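(* Let $L$ be a unimodular lattice, $c\colon L\to L$ an involution, and $v\in L_-(c)$ with $v^2=-2$; put $c_v=c\circ s_v$. Then (1) if $v$ is odd, then $d(c_v)=d(c)+1$; (2) if $v$ is even, then $d(c_v)=d(c)-1$; (3) $v$ is a Wu element with respect to $c$ if and only if $c_v$ is an even involution. In particular, if $c_v$ is even, then $d(c_v)=d(c)-1$.
   Context: A lattice is a finite rank free abelian group with an integral symmetric bilinear form $\langle x,y\rangle$, $x^2=\langle x,x\rangle$. Standing assumption: if $L$ is odd, it has a characteristic element (an element $w$ with $x^2\equiv\langle w,x\rangle \bmod 2$ for all $x$) lying in $L_+(c)$ or in $L_-(c)$. $L_\pm(c)=\operatorname{Ker}(1\mp c)$; their discriminant groups are $2$-periodic and isomorphic to $L/(L_++L_-)$; $d(c)$ is the rank of this $2$-periodic group. For $v^2=-2$, $s_v(x)=x+\langle x,v\rangle v$ (it commutes with $c$ since $v\in L_-$). An element $h\in L_-(c)$ is even if $\langle h,l\rangle$ is even for all $l\in L_-(c)$, odd otherwise; an even $h\in L_-(c)$ is a Wu element if $x^2+\langle x,cx\rangle\equiv\langle x,h\rangle \bmod 2$ for all $x\in L$ (equivalently, $\tfrac12 h$ represents the characteristic element of the discriminant bilinear form of $L_-$). An involution $c$ is even if $\langle x,cx\rangle+x^2$ is even for all $x\in L$. *)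

theory Defs
  imports "HOL-Analysis.Analysis"
begin

text \<open>A lattice of rank CARD('n) is modelled as the free abelian group int^'n together with
  an integral symmetric Gram matrix G; the bilinear form is x^T G y.\<close>

definition bil :: "int^'n^'n \<Rightarrow> int^'n \<Rightarrow> int^'n \<Rightarrow> int" where
  "bil G x y = (\<Sum>i\<in>UNIV. x$i * (G *v y)$i)"

definition lattice_form :: "int^'n^'n \<Rightarrow> bool" where
  "lattice_form G \<longleftrightarrow> transpose G = G"

definition unimodular :: "int^'n^'n \<Rightarrow> bool" where
  "unimodular G \<longleftrightarrow> lattice_form G \<and> (det G = 1 \<or> det G = -1)"

definition lat_involution :: "int^'n^'n \<Rightarrow> (int^'n \<Rightarrow> int^'n) \<Rightarrow> bool" where
  "lat_involution G c \<longleftrightarrow> (\<forall>x y. c (x + y) = c x + c y) \<and> (\<forall>x. c (c x) = x)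
     \<and> (\<forall>x y. bil G (c x) (c y) = bil G x y)"

definition Lplus :: "(int^'n \<Rightarrow> int^'n) \<Rightarrow> (int^'n) set" where
  "Lplus c = {x. c x = x}"

definition Lminus :: "(int^'n \<Rightarrow> int^'n) \<Rightarrow> (int^'n) set" where
  "Lminus c = {x. c x = - x}"

definition zspan :: "(int^'n) set \<Rightarrow> (int^'n) set" where
  "zspan S = {(\<Sum>s\<in>F. k s *s s) | F k. finite F \<and> F \<subseteq> S}"

text \<open>d(c): the rank (minimal number of generators) of the group L/(L_+ + L_-).\<close>
definition dinv :: "(int^'n \<Rightarrow> int^'n) \<Rightarrow> nat" where
  "dinv c = (LEAST k. \<exists>S. finite S \<and> card S = k \<and> zspan (S \<union> Lplus c \<union> Lminus c) = UNIV)"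

definition odd_lattice :: "int^'n^'n \<Rightarrow> bool" where
  "odd_lattice G \<longleftrightarrow> (\<exists>x. odd (bil G x x))"

definition characteristic :: "int^'n^'n \<Rightarrow> int^'n \<Rightarrow> bool" where
  "characteristic G w \<longleftrightarrow> (\<forall>x. bil G x x mod 2 = bil G w x mod 2)"

definition standing_assumption :: "int^'n^'n \<Rightarrow> (int^'n \<Rightarrow> int^'n) \<Rightarrow> bool" where
  "standing_assumption G c \<longleftrightarrow>
     (odd_lattice G \<longrightarrow> (\<exists>w. characteristic G w \<and> (w \<in> Lplus c \<or> w \<in> Lminus c)))"

definition refl_v :: "int^'n^'n \<Rightarrow> int^'n \<Rightarrow> int^'n \<Rightarrow> int^'n" where
  "refl_v G v x = x + bil G x v *s v"

definition even_elt :: "int^'n^'n \<Rightarrow> (int^'n \<Rightarrow> int^'n) \<Rightarrow> int^'n \<Rightarrow> bool" where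
  "even_elt G c h \<longleftrightarrow> h \<in> Lminus c \<and> (\<forall>l\<in>Lminus c. even (bil G h l))"

definition odd_elt :: "int^'n^'n \<Rightarrow> (int^'n \<Rightarrow> int^'n) \<Rightarrow> int^'n \<Rightarrow> bool" where
  "odd_elt G c h \<longleftrightarrow> h \<in> Lminus c \<and> (\<exists>l\<in>Lminus c. odd (bil G h l))"

definition wu_elt :: "int^'n^'n \<Rightarrow> (int^'n \<Rightarrow> int^'n) \<Rightarrow> int^'n \<Rightarrow> bool" where
  "wu_elt G c h \<longleftrightarrow> even_elt G c h \<and>
     (\<forall>x. (bil G x x + bil G x (c x)) mod 2 = bil G x h mod 2)"

definition even_involution :: "int^'n^'n \<Rightarrow> (int^'n \<Rightarrow> int^'n) \<Rightarrow> bool" where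
  "even_involution G c \<longleftrightarrow> lat_involution G c \<and> (\<forall>x. even (bil G x (c x) + bil G x x))"

end

theory Submission
  imports Defs "HOL-Library.Z2"
begin

lemma bil_expand: "bil G x y = (\<Sum>i\<in>UNIV. \<Sum>j\<in>UNIV. x$i * G$i$j * y$j)"
  unfolding bil_def matrix_vector_mult_def by (simp add: sum_distrib_left mult.assoc)

lemma bil_add1: "bil G (x + y) z = bil G x z + bil G y z"
  unfolding bil_def by (simp add: sum.distrib algebra_simps)
lemma bil_add2: "bil G z (x + y) = bil G z x + bil G z y"
  unfolding bil_expand by (simp add: sum.distrib algebra_simps)
lemma bil_smult1: "bil G (k *s x) z = k * bil G x z"
  unfolding bil_def by (simp add: sum_distrib_left algebra_simps)
lemma bil_smult2: "bil G z (k *s x) = k * bil G z x"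
  unfolding bil_expand by (simp add: sum_distrib_left algebra_simps)
lemma bil_neg1: "bil G (- x) z = - bil G x z"
  unfolding bil_def by (simp add: sum_negf)
lemma bil_neg2: "bil G z (- x) = - bil G z x"
  unfolding bil_expand by (simp add: sum_negf)
lemma bil_diff1: "bil G (x - y) z = bil G x z - bil G y z"
  using bil_add1[of G x "-y" z] bil_neg1[of G y z] by simp
lemma bil_diff2: "bil G z (x - y) = bil G z x - bil G z y"
  using bil_add2[of G z x "-y"] bil_neg2[of G z y] by simp
lemma bil_zero1[simp]: "bil G 0 z = 0" unfolding bil_def by simp
lemma bil_zero2[simp]: "bil G z 0 = 0" unfolding bil_expand by simp

lemmas bil_lin = bil_add1 bil_add2 bil_smult1 bil_smult2 bil_neg1 bil_neg2 bil_diff1 bil_diff2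

lemma bil_sym: assumes "lattice_form G" shows "bil G x y = bil G y x"
proof -
  have G: "G$i$j = G$j$i" for i j
    using assms unfolding lattice_form_def by (metis transpose_def vec_lambda_beta)
  show ?thesis unfolding bil_expand
    by (subst sum.swap) (simp add: G mult.commute mult.left_commute)
qed

lemma smult_cancel: "(k::int) \<noteq> 0 \<Longrightarrow> k *s x = k *s y \<Longrightarrow> x = y"
  by (simp add: vec_eq_iff)

section \<open>Involutions\<close>

lemma inv_add: "lat_involution G c \<Longrightarrow> c (x + y) = c x + c y"
  unfolding lat_involution_def by blast
lemma inv_inv[simp]: "lat_involution G c \<Longrightarrow> c (c x) = x"
  unfolding lat_involution_def by blast
lemma inv_iso: "lat_involution G c \<Longrightarrow> bil G (c x) (c y) = bil G x y"
  unfolding lat_involution_def by blast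
lemma inv_zero[simp]: "lat_involution G c \<Longrightarrow> c 0 = 0"
  using inv_add[of G c 0 0] by simp
lemma inv_neg: "lat_involution G c \<Longrightarrow> c (- x) = - c x"
proof -
  assume a: "lat_involution G c"
  have "c x + c (- x) = 0" using inv_add[OF a, of x "-x"] a by simp
  then show ?thesis by (simp add: minus_unique)
qed
lemma inv_diff: "lat_involution G c \<Longrightarrow> c (x - y) = c x - c y"
  using inv_add[of G c x "-y"] inv_neg[of G c y] by simp
lemma inv_smult_nat: "lat_involution G c \<Longrightarrow> c (int n *s x) = int n *s c x"
proof (induction n)
  case 0 then show ?case by simp
next
  case (Suc n)
  have "int (Suc n) *s x = int n *s x + x" by (simp add: vector_sadd_rdistrib)
  moreover have "int (Suc n) *s c x = int n *s c x + c x" by (simp add: vector_sadd_rdistrib)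
  ultimately show ?case using Suc inv_add[OF Suc.prems] by simp
qed
lemma inv_smult: assumes "lat_involution G c" shows "c (k *s x) = k *s c x"
proof (cases "k \<ge> 0")
  case True
  then have "k = int (nat k)" by simp
  then show ?thesis using inv_smult_nat[OF assms, of "nat k" x] by metis
next
  case False
  then have k: "k = - int (nat (-k))" by simp
  have "c (k *s x) = c (- (int (nat (-k)) *s x))" by (subst k, simp only: vector_smult_lneg)
  also have "\<dots> = - (int (nat (-k)) *s c x)" by (simp only: inv_neg[OF assms] inv_smult_nat[OF assms])
  also have "\<dots> = k *s c x" by (subst (2) k, simp only: vector_smult_lneg)
  finally show ?thesis .
qed

lemmas inv_lin = inv_add inv_neg inv_diff inv_smult

lemma bil_PM: assumes "lat_involution G c" "p \<in> Lplus c" "m \<in> Lminus c"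
  shows "bil G p m = 0"
proof -
  have "bil G p m = bil G (c p) (c m)" using inv_iso[OF assms(1)] by simp
  also have "\<dots> = - bil G p m" using assms(2,3) by (simp add: Lplus_def Lminus_def bil_neg2)
  finally show ?thesis by simp
qed

lemma bil_c_swap: assumes "lat_involution G c" shows "bil G (c x) y = bil G x (c y)"
  using inv_iso[OF assms, of x "c y"] assms by simp

section \<open>The composed involution\<close>

lemma cv_apply: assumes "lat_involution G c" "v \<in> Lminus c"
  shows "(c \<circ> refl_v G v) x = c x - bil G x v *s v"
  using assms by (simp add: refl_v_def inv_add inv_smult Lminus_def vector_smult_rneg)

lemma bil_cx_v: assumes "lat_involution G c" "v \<in> Lminus c"
  shows "bil G (c x) v = - bil G x v"
  using bil_c_swap[OF assms(1), of x v] assms(2) by (simp add: Lminus_def bil_neg2)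

lemma cv_involution:
  assumes G: "lattice_form G" and c: "lat_involution G c" and v: "v \<in> Lminus c"
    and vv: "bil G v v = -2"
  shows "lat_involution G (c \<circ> refl_v G v)"
proof -
  note cv = cv_apply[OF c v]
  have add: "(c \<circ> refl_v G v) (x + y) = (c \<circ> refl_v G v) x + (c \<circ> refl_v G v) y" for x y
    unfolding cv by (simp add: inv_add[OF c] bil_add1 vector_sadd_rdistrib)
  have cvv: "c v = - v" using v by (simp add: Lminus_def)
  have inv: "(c \<circ> refl_v G v) ((c \<circ> refl_v G v) x) = x" for x
  proof -
    have "bil G ((c \<circ> refl_v G v) x) v = bil G x v"
      unfolding cv by (simp add: bil_diff1 bil_smult1 bil_cx_v[OF c v] vv)
    then show ?thesis
      unfolding cv by (simp add: inv_inv[OF c] inv_diff[OF c] inv_smult[OF c] cvv vector_smult_rneg)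
  qed
  have iso: "bil G ((c \<circ> refl_v G v) x) ((c \<circ> refl_v G v) y) = bil G x y" for x y
  proof -
    have a: "bil G v (c y) = - bil G v y"
      using bil_sym[OF G, of v "c y"] bil_sym[OF G, of v y] bil_cx_v[OF c v, of y] by simp
    show ?thesis
      unfolding cv by (simp add: bil_diff1 bil_diff2 bil_smult1 bil_smult2 bil_cx_v[OF c v] a vv
          inv_iso[OF c] bil_sym[OF G, of y v] algebra_simps)
  qed
  show ?thesis unfolding lat_involution_def using add inv iso by blast
qed


section \<open>Spans and the generator count\<close>

interpretation zm: module "(*s) :: int \<Rightarrow> int^'n \<Rightarrow> int^'n"
  by unfold_locales (simp_all add: vector_add_ldistrib vector_sadd_rdistrib vector_smult_assoc)

lemma zspan_eq: "zspan S = zm.span S"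
  unfolding zspan_def zm.span_explicit by (rule refl)

definition gen :: "(int^'n) set \<Rightarrow> nat" where
  "gen H = (LEAST k. \<exists>S. finite S \<and> card S = k \<and> zm.span (S \<union> H) = UNIV)"

lemma dinv_gen: "dinv c = gen (Lplus c \<union> Lminus c)"
  unfolding dinv_def gen_def zspan_eq by (simp add: Un_assoc)

lemma axis_expansion: "(\<Sum>i\<in>UNIV. (x$i) *s axis i (1::int)) = x"
proof -
  have "(\<Sum>j\<in>UNIV. x$j * (if i = j then 1 else 0)) = (\<Sum>j\<in>UNIV. if i = j then x$j else 0)" for i
    by (rule sum.cong) auto
  then show ?thesis by (simp add: vec_eq_iff sum_component axis_def)
qed

lemma span_axes: "zm.span (range (\<lambda>i. axis i (1::int))) = (UNIV :: (int^'n) set)"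
proof -
  have "x \<in> zm.span (range (\<lambda>i. axis i (1::int)))" for x :: "int^'n"
  proof -
    have "(\<Sum>i\<in>UNIV. (x$i) *s axis i (1::int)) \<in> zm.span (range (\<lambda>i. axis i (1::int)))"
      by (intro zm.span_sum zm.span_scale zm.span_base) auto
    then show ?thesis by (simp add: axis_expansion)
  qed
  then show ?thesis by blast
qed

lemma gen_exists: "\<exists>S. finite S \<and> card S = k \<and> zm.span (S \<union> H) = UNIV \<Longrightarrow>
   \<exists>S. finite S \<and> card S = gen H \<and> zm.span (S \<union> H) = UNIV"
  unfolding gen_def by (rule LeastI_ex) blast

lemma gen_witness: "\<exists>S. finite S \<and> card S = gen H \<and> zm.span (S \<union> (H :: (int^'n) set)) = UNIV"
proof (rule gen_exists)
  let ?S = "range (\<lambda>i. axis i (1::int)) :: (int^'n) set"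
  have "zm.span ?S \<subseteq> zm.span (?S \<union> H)" by (rule zm.span_mono) blast
  then show "\<exists>S. finite S \<and> card S = card ?S \<and> zm.span (S \<union> H) = UNIV"
    using span_axes by (intro exI[of _ ?S]) auto
qed

lemma gen_le: "finite S \<Longrightarrow> zm.span (S \<union> H) = UNIV \<Longrightarrow> gen H \<le> card S"
  unfolding gen_def by (rule Least_le) blast

lemma span_union_cong: "zm.span H1 = zm.span H2 \<Longrightarrow> zm.span (S \<union> H1) = zm.span (S \<union> H2)"
proof -
  assume e: "zm.span H1 = zm.span H2"
  have a: "zm.span (S \<union> H1) \<subseteq> zm.span (S \<union> H2)" if "zm.span H1 = zm.span H2" for H1 H2
  proof -
    have "H1 \<subseteq> zm.span (S \<union> H2)"
      using zm.span_superset[of H1] that zm.span_mono[of H2 "S \<union> H2"] by blast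
    moreover have "S \<subseteq> zm.span (S \<union> H2)" using zm.span_superset by blast
    ultimately show ?thesis by (intro zm.span_minimal[OF _ zm.subspace_span]) blast
  qed
  show ?thesis using a[OF e] a[OF e[symmetric]] by blast
qed

lemma gen_cong: "zm.span H1 = zm.span H2 \<Longrightarrow> gen H1 = gen H2"
  unfolding gen_def using span_union_cong[of H1 H2] by simp

lemma gen_exchange:
  fixes H1 H2 :: "(int^'n) set"
  assumes two: "\<And>x. 2 *s x \<in> zm.span H2" and m0: "m0 \<notin> zm.span H2"
    and eq: "zm.span H1 = zm.span (insert m0 H2)"
  shows "gen H2 = gen H1 + 1"
proof (rule antisym)
  obtain S1 where S1: "finite S1" "card S1 = gen H1" "zm.span (S1 \<union> H1) = UNIV"
    using gen_witness by blast
  have "zm.span (insert m0 S1 \<union> H2) = zm.span (S1 \<union> insert m0 H2)" by simp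
  also have "\<dots> = zm.span (S1 \<union> H1)" using span_union_cong[OF eq] by simp
  finally have "gen H2 \<le> card (insert m0 S1)" using S1 by (intro gen_le) auto
  also have "\<dots> \<le> card S1 + 1" using S1(1) by (simp add: card_insert_if)
  finally show "gen H2 \<le> gen H1 + 1" using S1 by simp
next
  obtain S2 where S2: "finite S2" "card S2 = gen H2" "zm.span (S2 \<union> H2) = UNIV"
    using gen_witness by blast
  have H2H1: "zm.span H2 \<subseteq> zm.span H1" unfolding eq by (rule zm.span_mono) blast
  have m0H1: "m0 \<in> zm.span H1" unfolding eq by (rule zm.span_base) blast
  have "m0 \<in> zm.span (S2 \<union> H2)" using S2 by simp
  then obtain x y where xy: "m0 = x + y" "x \<in> zm.span S2" "y \<in> zm.span H2"
    unfolding zm.span_Un by blast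
  then obtain u where u: "x = (\<Sum>s\<in>S2. u s *s s)" using zm.span_finite[OF S2(1)] by blast
  have "\<exists>s0\<in>S2. odd (u s0)"
  proof (rule ccontr)
    assume ne: "\<not> ?thesis"
    have "x = (\<Sum>s\<in>S2. 2 *s ((u s div 2) *s s))" unfolding u
    proof (rule sum.cong[OF refl])
      fix s assume "s \<in> S2"
      then have "2 * (u s div 2) = u s" using ne by (simp add: even_two_times_div_two)
      then show "u s *s s = 2 *s ((u s div 2) *s s)" by (simp add: vector_smult_assoc)
    qed
    then have "x = 2 *s (\<Sum>s\<in>S2. (u s div 2) *s s)" by (simp add: zm.scale_sum_right)
    then have "x \<in> zm.span H2" using two by simp
    then have "m0 \<in> zm.span H2" using xy zm.span_add by blast
    then show False using m0 by blast
  qed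
  then obtain s0 where s0: "s0 \<in> S2" "odd (u s0)" by blast
  define S where "S = S2 - {s0}"
  have x_split: "x = u s0 *s s0 + (\<Sum>s\<in>S. u s *s s)"
    unfolding u S_def by (rule sum.remove[OF S2(1) s0(1)])
  have "u s0 *s s0 = m0 - y - (\<Sum>s\<in>S. u s *s s)" using xy(1) x_split by simp
  moreover have "m0 \<in> zm.span (S \<union> H1)" using m0H1 zm.span_mono[of H1 "S \<union> H1"] by blast
  moreover have "y \<in> zm.span (S \<union> H1)" using xy(3) H2H1 zm.span_mono[of H1 "S \<union> H1"] by blast
  moreover have "(\<Sum>s\<in>S. u s *s s) \<in> zm.span (S \<union> H1)"
    by (intro zm.span_sum zm.span_scale zm.span_base) auto
  ultimately have a: "u s0 *s s0 \<in> zm.span (S \<union> H1)" by (simp only: zm.span_diff)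
  obtain k where "u s0 = 2 * k + 1" using s0(2) by (rule oddE)
  then have k: "u s0 - 1 = 2 * k" by simp
  have "(u s0 - 1) *s s0 = 2 *s (k *s s0)" by (simp add: k vector_smult_assoc)
  then have "(u s0 - 1) *s s0 \<in> zm.span (S \<union> H1)"
    using two[of "k *s s0"] H2H1 zm.span_mono[of H1 "S \<union> H1"] by auto
  then have "u s0 *s s0 - (u s0 - 1) *s s0 \<in> zm.span (S \<union> H1)" using a zm.span_diff by blast
  moreover have "u s0 *s s0 - (u s0 - 1) *s s0 = s0" by (simp add: vec_eq_iff algebra_simps)
  ultimately have s0in: "s0 \<in> zm.span (S \<union> H1)" by simp
  have "S2 \<union> H2 \<subseteq> zm.span (S \<union> H1)"
  proof -
    have "S2 = insert s0 S" using s0(1) S_def by blast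
    then have "S2 \<subseteq> zm.span (S \<union> H1)" using s0in zm.span_superset by blast
    moreover have "H2 \<subseteq> zm.span (S \<union> H1)"
      using zm.span_superset[of H2] H2H1 zm.span_mono[of H1 "S \<union> H1"] by blast
    ultimately show ?thesis by blast
  qed
  then have "zm.span (S2 \<union> H2) \<subseteq> zm.span (S \<union> H1)"
    by (rule zm.span_minimal[OF _ zm.subspace_span])
  then have "zm.span (S \<union> H1) = UNIV" using S2(3) by blast
  then have "gen H1 \<le> card S" using S2(1) S_def by (intro gen_le) auto
  also have "card S = card S2 - 1" using S_def S2(1) s0(1) by simp
  finally have "gen H1 \<le> card S2 - 1" .
  moreover have "card S2 > 0" using S2(1) s0(1) card_gt_0_iff by blast
  ultimately show "gen H1 + 1 \<le> gen H2" using S2(2) by linarith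
qed


lemma bit_UNIV: "(UNIV :: bit set) = {0, 1}"
  using bit_not_zero_iff by blast

instance bit :: finite
  by standard (simp add: bit_UNIV)

lemma card_kernel_image:
  fixes f :: "'v::{finite, ab_group_add} \<Rightarrow> 'w::ab_group_add"
  assumes add: "\<And>x y. f (x + y) = f x + f y"
  shows "card (UNIV :: 'v set) = card (range f) * card {x. f x = 0}"
proof -
  have f0: "f 0 = 0" using add[of 0 0] by simp
  have fdiff: "f (x - y) = f x - f y" for x y
    using add[of "x - y" y] by (simp add: algebra_simps)
  have U: "(UNIV :: 'v set) = (\<Union>y\<in>range f. f -` {y})" by blast
  have "card (\<Union>y\<in>range f. f -` {y}) = (\<Sum>y\<in>range f. card (f -` {y}))"
    by (rule card_UN_disjoint) auto
  also have "\<dots> = (\<Sum>y\<in>range f. card {x. f x = 0})"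
  proof (rule sum.cong[OF refl])
    fix y assume "y \<in> range f"
    then obtain x0 where x0: "y = f x0" by blast
    have "bij_betw (\<lambda>k. k + x0) {x. f x = 0} (f -` {y})"
    proof (rule bij_betwI[where g="\<lambda>x. x - x0"])
      show "(\<lambda>k. k + x0) \<in> {x. f x = 0} \<rightarrow> f -` {y}" using add x0 by auto
      show "(\<lambda>x. x - x0) \<in> f -` {y} \<rightarrow> {x. f x = 0}" using fdiff x0 by auto
    qed auto
    then show "card (f -` {y}) = card {x. f x = 0}" by (simp add: bij_betw_same_card)
  qed
  also have "\<dots> = card (range f) * card {x. f x = 0}" by simp
  finally show ?thesis using U by simp
qed

definition chi :: "bit \<Rightarrow> int" where "chi b = (if b = 0 then 1 else -1)"

lemma chi_add: "chi (a + b) = chi a * chi b"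
  by (cases a; cases b) (simp_all add: chi_def)

lemma chi_flip: "b \<noteq> 0 \<Longrightarrow> chi (a + b) = - chi a"
  by (cases a; cases b) (simp_all add: chi_def)

lemma sum_flip_zero:
  fixes F :: "'a \<Rightarrow> int"
  assumes "bij_betw g X X" "\<And>x. x \<in> X \<Longrightarrow> F (g x) = - F x"
  shows "sum F X = 0"
proof -
  have "sum F X = sum (\<lambda>x. F (g x)) X" using sum.reindex_bij_betw[OF assms(1), of F] by simp
  also have "\<dots> = - sum F X" using assms(2) by (simp add: sum_negf)
  finally show ?thesis by simp
qed

lemma card_perp:
  fixes b :: "'v::{finite, ab_group_add} \<Rightarrow> 'v \<Rightarrow> bit" and W :: "'v set"
  assumes addl: "\<And>x y z. b (x + y) z = b x z + b y z"
    and addr: "\<And>x y z. b x (y + z) = b x y + b x z"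
    and nd: "\<And>w. w \<noteq> 0 \<Longrightarrow> \<exists>x. b x w \<noteq> 0"
    and W0: "0 \<in> W" and Wadd: "\<And>x y. x \<in> W \<Longrightarrow> y \<in> W \<Longrightarrow> x + y \<in> W"
    and Wneg: "\<And>x. x \<in> W \<Longrightarrow> - x \<in> W"
  shows "card W * card {x. \<forall>w\<in>W. b x w = 0} = card (UNIV :: 'v set)"
proof -
  let ?P = "{x. \<forall>w\<in>W. b x w = 0}"
  have b0l: "b 0 z = 0" for z using addl[of 0 0 z] by simp
  have b0r: "b x 0 = 0" for x using addr[of x 0 0] by simp
  define S where "S = (\<Sum>x\<in>UNIV. \<Sum>w\<in>W. chi (b x w))"
  have inner1: "(\<Sum>w\<in>W. chi (b x w)) = (if x \<in> ?P then int (card W) else 0)" for x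
  proof (cases "x \<in> ?P")
    case True
    then have "(\<Sum>w\<in>W. chi (b x w)) = (\<Sum>w\<in>W. 1)" by (intro sum.cong) (auto simp: chi_def)
    then show ?thesis using True by simp
  next
    case False
    then obtain w0 where w0: "w0 \<in> W" "b x w0 \<noteq> 0" by blast
    have "bij_betw (\<lambda>w. w + w0) W W"
    proof (rule bij_betwI[where g="\<lambda>w. w - w0"])
      show "(\<lambda>w. w + w0) \<in> W \<rightarrow> W" using Wadd w0 by auto
      have "w - w0 \<in> W" if "w \<in> W" for w
        using Wadd[OF that Wneg[OF w0(1)]] by simp
      then show "(\<lambda>w. w - w0) \<in> W \<rightarrow> W" by blast
    qed auto
    moreover have "chi (b x (w + w0)) = - chi (b x w)" for w
      using addr chi_flip w0(2) by simp
    ultimately have "(\<Sum>w\<in>W. chi (b x w)) = 0"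
      by (intro sum_flip_zero[where g="\<lambda>w. w + w0"]) auto
    then show ?thesis by (simp only: if_not_P[OF False])
  qed
  have "S = (\<Sum>x\<in>UNIV. if x \<in> ?P then int (card W) else 0)" unfolding S_def using inner1 by simp
  also have "\<dots> = (\<Sum>x\<in>?P. int (card W))"
    by (rule sum.mono_neutral_cong_right) auto
  also have "\<dots> = int (card W) * int (card ?P)" by simp
  finally have S1: "S = int (card W) * int (card ?P)" .
  have inner2: "(\<Sum>x\<in>UNIV. chi (b x w)) = (if w = 0 then int (card (UNIV :: 'v set)) else 0)" for w
  proof (cases "w = 0")
    case True
    then show ?thesis by (simp add: b0r chi_def)
  next
    case False
    then obtain x0 where x0: "b x0 w \<noteq> 0" using nd by blast
    have "bij_betw (\<lambda>x. x + x0) UNIV UNIV"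
      by (rule bij_betwI[where g="\<lambda>x. x - x0"]) auto
    moreover have "chi (b (x + x0) w) = - chi (b x w)" for x
      using addl chi_flip x0 by simp
    ultimately have "(\<Sum>x\<in>UNIV. chi (b x w)) = 0"
      by (intro sum_flip_zero[where g="\<lambda>x. x + x0"]) auto
    then show ?thesis by (simp only: if_not_P[OF False])
  qed
  have "S = (\<Sum>w\<in>W. \<Sum>x\<in>UNIV. chi (b x w))" unfolding S_def by (rule sum.swap)
  also have "\<dots> = (\<Sum>w\<in>W. if w = 0 then int (card (UNIV :: 'v set)) else 0)" using inner2 by simp
  also have "\<dots> = int (card (UNIV :: 'v set))"
    using W0 by (simp add: sum.delta finite_subset)
  finally have "int (card W) * int (card ?P) = int (card (UNIV :: 'v set))" using S1 by simp
  then show ?thesis by (simp only: of_nat_mult[symmetric] of_nat_eq_iff)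
qed


section \<open>Reduction mod 2\<close>

definition red :: "int^'n \<Rightarrow> bit^'n" where "red x = (\<chi> i. of_int (x$i))"
definition lift :: "bit^'n \<Rightarrow> int^'n" where "lift y = (\<chi> i. if y$i = 0 then 0 else 1)"

lemma of_int_bit: "(of_int k :: bit) = (if even k then 0 else 1)"
proof (cases "even k")
  case True
  then obtain m where "k = 2 * m" by blast
  then show ?thesis by simp
next
  case False
  then obtain m where "k = 2 * m + 1" using oddE by blast
  then show ?thesis by simp
qed

lemma of_int_bit_0: "(of_int k :: bit) = 0 \<longleftrightarrow> even k"
  by (simp add: of_int_bit)

lemma red_add: "red (x + y) = red x + red y"
  by (simp add: red_def vec_eq_iff)
lemma red_neg: "red (- x) = - red x"
  by (simp add: red_def vec_eq_iff)
lemma red_diff: "red (x - y) = red x - red y"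
  by (simp add: red_def vec_eq_iff)
lemma red_smult: "red (k *s x) = of_int k *s red x"
  by (simp add: red_def vec_eq_iff)
lemma red_zero[simp]: "red 0 = 0"
  by (simp add: red_def vec_eq_iff)

lemma red_lift: "red (lift y) = y"
proof -
  have "(of_int (if y$i = 0 then 0 else 1) :: bit) = y$i" for i
    by (cases "y$i") simp_all
  then show ?thesis by (simp add: red_def lift_def vec_eq_iff)
qed

lemma red_zero_iff: "red x = 0 \<longleftrightarrow> (\<exists>u. x = 2 *s u)"
proof
  assume "red x = 0"
  then have e: "even (x$i)" for i by (simp add: red_def vec_eq_iff of_int_bit_0)
  have "x = 2 *s (\<chi> i. x$i div 2)" using e by (simp add: vec_eq_iff)
  then show "\<exists>u. x = 2 *s u" by blast
next
  assume "\<exists>u. x = 2 *s u"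
  then obtain u where "x = 2 *s u" by blast
  then show "red x = 0" by (simp add: red_def vec_eq_iff)
qed

lemma red_eq_iff: "red x = red y \<longleftrightarrow> (\<exists>u. x = y + 2 *s u)"
proof -
  have "red x = red y \<longleftrightarrow> red (x - y) = 0" by (simp add: red_diff)
  also have "\<dots> \<longleftrightarrow> (\<exists>u. x - y = 2 *s u)" by (rule red_zero_iff)
  also have "\<dots> \<longleftrightarrow> (\<exists>u. x = y + 2 *s u)" by (simp add: algebra_simps)
  finally show ?thesis .
qed

lemma lift_red: "\<exists>u. lift (red x) = x + 2 *s u"
proof -
  have "red (lift (red x)) = red x" by (rule red_lift)
  then show ?thesis using red_eq_iff by blast
qed

lemma red_two[simp]: "red (2 *s u) = 0"
  using red_zero_iff by blast

definition bb :: "int^'n^'n \<Rightarrow> bit^'n \<Rightarrow> bit^'n \<Rightarrow> bit" where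
  "bb G y z = of_int (bil G (lift y) (lift z))"

lemma bb_red: "bb G (red x) (red z) = of_int (bil G x z)"
proof -
  obtain u where u: "lift (red x) = x + 2 *s u" using lift_red by blast
  obtain w where w: "lift (red z) = z + 2 *s w" using lift_red by blast
  have "bil G (x + 2 *s u) (z + 2 *s w) = bil G x z + 2 * (bil G u z + bil G x w + 2 * bil G u w)"
    by (simp add: bil_add1 bil_add2 bil_smult1 bil_smult2 algebra_simps)
  then show ?thesis unfolding bb_def u w by simp
qed

lemma bb_add1: "bb G (y1 + y2) z = bb G y1 z + bb G y2 z"
proof -
  have "bb G (y1 + y2) z = bb G (red (lift y1 + lift y2)) (red (lift z))"
    by (simp add: red_add red_lift)
  also have "\<dots> = of_int (bil G (lift y1) (lift z)) + of_int (bil G (lift y2) (lift z))"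
    unfolding bb_red by (simp add: bil_add1)
  finally show ?thesis by (simp add: bb_def)
qed

lemma bb_add2: "bb G z (y1 + y2) = bb G z y1 + bb G z y2"
proof -
  have "bb G z (y1 + y2) = bb G (red (lift z)) (red (lift y1 + lift y2))"
    by (simp add: red_add red_lift)
  also have "\<dots> = of_int (bil G (lift z) (lift y1)) + of_int (bil G (lift z) (lift y2))"
    unfolding bb_red by (simp add: bil_add2)
  finally show ?thesis by (simp add: bb_def)
qed

lemma bil_axis: "bil G (axis j 1) x = (G *v x)$j"
proof -
  have "bil G (axis j 1) x = (\<Sum>i\<in>UNIV. if i = j then (G *v x)$i else 0)"
    unfolding bil_def by (rule sum.cong) (auto simp: axis_def)
  then show ?thesis by simp
qed

definition redm :: "int^'n^'n \<Rightarrow> bit^'n^'n" where "redm G = (\<chi> i j. of_int (G$i$j))"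

lemma red_mult: "red (G *v x) = redm G *v red x"
  by (simp add: red_def redm_def vec_eq_iff matrix_vector_mult_def of_int_sum)

lemma det_redm: "det (redm G) = of_int (det G)"
  unfolding det_def redm_def by (simp add: of_int_sum of_int_prod)

lemma bb_nondeg:
  assumes U: "unimodular G" and y: "y \<noteq> 0"
  shows "\<exists>z. bb G z y \<noteq> 0"
proof (rule ccontr)
  assume "\<not> ?thesis"
  then have all: "bb G z y = 0" for z by blast
  define x where "x = lift y"
  have yx: "y = red x" unfolding x_def by (simp add: red_lift)
  have "even ((G *v x)$j)" for j
  proof -
    have "bb G (red (axis j 1)) (red x) = 0" using all yx by simp
    then show ?thesis unfolding bb_red bil_axis of_int_bit_0 .
  qed
  then have "red (G *v x) = 0" by (simp add: red_def vec_eq_iff of_int_bit_0)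
  then have "redm G *v red x = 0" by (simp add: red_mult)
  moreover have "det (redm G) \<noteq> 0"
    using U unfolding unimodular_def det_redm by auto
  then have "inj ((*v) (redm G))" using invertible_det_nz inj_matrix_vector_mult by blast
  ultimately have "red x = 0"
    by (metis matrix_vector_mult_0_right injD)
  then show False using y yx by simp
qed

context
  fixes G :: "int^'n^'n" and c :: "int^'n \<Rightarrow> int^'n"
  assumes c: "lat_involution G c"
begin

definition nn :: "int^'n \<Rightarrow> int^'n" where "nn x = x - c x"

lemma nn_add: "nn (x + y) = nn x + nn y"
  by (simp add: nn_def inv_add[OF c] algebra_simps)
lemma nn_smult: "nn (k *s x) = k *s nn x"
  by (simp add: nn_def inv_smult[OF c] vec_eq_iff algebra_simps)
lemma nn_minus: "nn x \<in> Lminus c"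
  by (simp add: nn_def Lminus_def inv_diff[OF c] inv_inv[OF c])

definition Nb :: "bit^'n \<Rightarrow> bit^'n" where "Nb y = red (nn (lift y))"

lemma Nb_red: "Nb (red x) = red (nn x)"
proof -
  obtain u where u: "lift (red x) = x + 2 *s u" using lift_red by blast
  show ?thesis unfolding Nb_def u by (simp add: nn_add nn_smult red_add)
qed

lemma Nb_add: "Nb (y + z) = Nb y + Nb z"
proof -
  have e: "y + z = red (lift y + lift z)" by (simp add: red_add red_lift)
  have "Nb (y + z) = Nb (red (lift y + lift z))" using e by simp
  also have "\<dots> = red (nn (lift y + lift z))" by (rule Nb_red)
  also have "\<dots> = Nb y + Nb z" by (simp add: nn_add red_add Nb_def)
  finally show ?thesis .
qed

lemma Nb_adj: "bb G (Nb y) z = bb G y (Nb z)"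
proof -
  have "bb G (Nb (red (lift y))) (red (lift z)) = bb G (red (lift y)) (Nb (red (lift z)))"
    unfolding Nb_red bb_red nn_def
    by (simp add: bil_diff1 bil_diff2 bil_c_swap[OF c])
  then show ?thesis by (simp add: red_lift)
qed

lemma F2_key:
  assumes U: "unimodular G" and v: "v \<in> Lminus c" and ev: "\<forall>l\<in>Lminus c. even (bil G v l)"
  shows "\<exists>x. x - c x = v"
proof -
  have G: "lattice_form G" using U unfolding unimodular_def by blast
  define K where "K = {y. Nb y = 0}"
  define P where "P = {x. \<forall>w\<in>K. bb G x w = 0}"
  have Nb0: "Nb 0 = 0" using Nb_add[of 0 0] by simp
  have Nbneg: "Nb (- y) = - Nb y" for y
  proof -
    have "Nb y + Nb (- y) = 0" using Nb_add[of y "- y"] Nb0 by simp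
    then show ?thesis by (simp add: minus_unique)
  qed
  have bb0: "bb G x 0 = 0" for x using bb_add2[of G x 0 0] by simp
  have cardU: "card (UNIV :: (bit^'n) set) = card (range Nb) * card K"
    unfolding K_def by (rule card_kernel_image) (rule Nb_add)
  have cardP: "card K * card P = card (UNIV :: (bit^'n) set)"
    unfolding P_def
  proof (rule card_perp)
    show "\<And>x y z. bb G (x + y) z = bb G x z + bb G y z" by (rule bb_add1)
    show "\<And>x y z. bb G x (y + z) = bb G x y + bb G x z" by (rule bb_add2)
    show "\<And>w. w \<noteq> 0 \<Longrightarrow> \<exists>x. bb G x w \<noteq> 0" by (rule bb_nondeg[OF U])
    show "0 \<in> K" unfolding K_def using Nb0 by simp
    show "\<And>x y. x \<in> K \<Longrightarrow> y \<in> K \<Longrightarrow> x + y \<in> K" unfolding K_def by (simp add: Nb_add)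
    show "\<And>x. x \<in> K \<Longrightarrow> - x \<in> K" unfolding K_def by (simp add: Nbneg)
  qed
  have sub: "range Nb \<subseteq> P"
  proof
    fix z assume "z \<in> range Nb"
    then obtain y where y: "z = Nb y" by blast
    have "bb G (Nb y) w = 0" if "w \<in> K" for w
      using that unfolding Nb_adj K_def by (simp add: bb0)
    then show "z \<in> P" unfolding P_def y by blast
  qed
  have "0 \<in> K" unfolding K_def using Nb0 by simp
  then have "card K > 0" by (simp add: card_gt_0_iff) blast
  moreover have "card K * card (range Nb) = card K * card P" using cardU cardP by (metis mult.commute)
  ultimately have "card (range Nb) = card P" by (metis mult_left_cancel less_not_refl)
  then have rP: "range Nb = P" by (intro card_subset_eq sub) simp_all
  have "red v \<in> P"
    unfolding P_def
  proof (intro CollectI ballI)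
    fix k assume k: "k \<in> K"
    define x where "x = lift k"
    have "red (nn x) = 0" using k unfolding K_def Nb_def x_def by simp
    then obtain u where u: "nn x = 2 *s u" using red_zero_iff by blast
    have "2 *s c u = 2 *s (- u)"
    proof -
      have "c (nn x) = - nn x" using nn_minus by (simp add: Lminus_def)
      then show ?thesis unfolding u by (simp add: inv_smult[OF c] vector_smult_rneg)
    qed
    then have um: "u \<in> Lminus c" unfolding Lminus_def by (auto intro: smult_cancel[of 2])
    have "c (x - u) = x - u"
    proof -
      have "x - c x = 2 *s u" using u by (simp add: nn_def)
      then have "c x = x - 2 *s u" by (simp add: algebra_simps)
      moreover have "c u = - u" using um by (simp add: Lminus_def)
      ultimately show ?thesis by (simp add: inv_diff[OF c] vec_eq_iff)
    qed
    then have xu: "x - u \<in> Lplus c" by (simp add: Lplus_def)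
    have "bil G v (x - u) = 0"
      using bil_PM[OF c xu v] bil_sym[OF G, of v "x - u"] by simp
    then have "bil G v x = bil G v u" by (simp add: bil_diff2)
    then have "even (bil G v x)" using ev um by simp
    then have "bb G (red v) (red x) = 0" by (simp add: bb_red of_int_bit_0)
    then show "bb G (red v) k = 0" unfolding x_def by (simp add: red_lift)
  qed
  then obtain y where "red v = Nb y" using rP by blast
  then have "red v = red (nn (lift y))" unfolding Nb_def .
  then obtain w where w: "v = nn (lift y) + 2 *s w" using red_eq_iff by blast
  have "2 *s w \<in> Lminus c"
  proof -
    have "2 *s w = v - nn (lift y)" using w by simp
    then show ?thesis using v nn_minus[of "lift y"]
      by (simp add: Lminus_def inv_diff[OF c])
  qed
  then have "2 *s c w = 2 *s (- w)" by (simp add: Lminus_def inv_smult[OF c] vector_smult_rneg)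
  then have "c w = - w" using smult_cancel[of 2 "c w" "- w"] by simp
  then have "nn w = 2 *s w" by (simp add: nn_def vec_eq_iff)
  then have "v = nn (lift y + w)" using w by (simp add: nn_add)
  then show ?thesis unfolding nn_def by metis
qed

end


lemma two_in_span: assumes "lat_involution G d"
  shows "2 *s x \<in> zm.span (Lplus d \<union> Lminus d)"
proof -
  have "x + d x \<in> Lplus d" using assms by (simp add: Lplus_def inv_add add.commute)
  moreover have "x - d x \<in> Lminus d" using assms by (simp add: Lminus_def inv_diff)
  ultimately have "(x + d x) + (x - d x) \<in> zm.span (Lplus d \<union> Lminus d)"
    by (intro zm.span_add zm.span_base) auto
  moreover have "(x + d x) + (x - d x) = 2 *s x" by (simp add: vec_eq_iff)
  ultimately show ?thesis by simp
qed

context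
  fixes G :: "int^'n^'n" and c :: "int^'n \<Rightarrow> int^'n" and v :: "int^'n"
  assumes G: "lattice_form G" and c: "lat_involution G c" and v: "v \<in> Lminus c"
    and vv: "bil G v v = -2"
begin

lemma cv': "(c \<circ> refl_v G v) x = c x - bil G x v *s v"
  using cv_apply[OF c v] .

lemma cvv: "c v = - v" using v by (simp add: Lminus_def)

lemma Lplus_cv_iff: "y \<in> Lplus (c \<circ> refl_v G v) \<longleftrightarrow> c y = y + bil G y v *s v"
  unfolding Lplus_def cv' by (auto simp: algebra_simps)

lemma Lminus_cv_D: assumes "y \<in> Lminus (c \<circ> refl_v G v)"
  shows "bil G y v = 0" "y \<in> Lminus c"
proof -
  have cy: "c y = bil G y v *s v - y" using assms unfolding Lminus_def cv' by (auto simp: algebra_simps)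
  have "bil G (c y) v = - bil G y v" by (rule bil_cx_v[OF c v])
  moreover have "bil G (c y) v = - 3 * bil G y v" unfolding cy by (simp add: bil_diff1 bil_smult1 vv)
  ultimately show t: "bil G y v = 0" by simp
  show "y \<in> Lminus c" using cy t by (simp add: Lminus_def)
qed

lemma Lminus_cv_I: "y \<in> Lminus c \<Longrightarrow> bil G y v = 0 \<Longrightarrow> y \<in> Lminus (c \<circ> refl_v G v)"
  unfolding Lminus_def cv' by simp

lemma Lplus_sub: "y \<in> Lplus c \<Longrightarrow> y \<in> Lplus (c \<circ> refl_v G v)"
proof -
  assume y: "y \<in> Lplus c"
  have "bil G y v = 0" by (rule bil_PM[OF c y v])
  then show ?thesis using y unfolding Lplus_def cv' by simp
qed

lemma v_Lplus_cv: "v \<in> Lplus (c \<circ> refl_v G v)"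
  unfolding Lplus_def cv' by (simp add: cvv vv vec_eq_iff)

lemma Lminus_closed: "x \<in> Lminus c \<Longrightarrow> y \<in> Lminus c \<Longrightarrow> x + y \<in> Lminus c"
  "x \<in> Lminus c \<Longrightarrow> k *s x \<in> Lminus c"
  "x \<in> Lminus c \<Longrightarrow> y \<in> Lminus c \<Longrightarrow> x - y \<in> Lminus c"
  by (auto simp: Lminus_def inv_add[OF c] inv_smult[OF c] inv_diff[OF c] vector_smult_rneg)

lemma Lplus_cv_t: assumes "y \<in> Lplus (c \<circ> refl_v G v)" "m \<in> Lminus c"
  shows "bil G y v * bil G v m = - 2 * bil G y m"
proof -
  have cy: "c y = y + bil G y v *s v" using assms(1) Lplus_cv_iff by blast
  have "bil G (c y) m = bil G y (c m)" by (rule bil_c_swap[OF c])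
  also have "\<dots> = - bil G y m" using assms(2) by (simp add: Lminus_def bil_neg2)
  finally have "bil G (y + bil G y v *s v) m = - bil G y m" using cy by simp
  then show ?thesis by (simp add: bil_add1 bil_smult1)
qed

lemma odd_case:
  assumes m0: "m0 \<in> Lminus c" and m0odd: "odd (bil G v m0)"
  shows "dinv (c \<circ> refl_v G v) = dinv c + 1"
proof -
  let ?c' = "c \<circ> refl_v G v"
  let ?H1 = "Lplus c \<union> Lminus c" and ?H2 = "Lplus ?c' \<union> Lminus ?c'"
  have c': "lat_involution G ?c'" by (rule cv_involution[OF G c v vv])
  have Pt: "even (bil G y v)" if "y \<in> Lplus ?c'" for y
  proof -
    have "bil G y v * bil G v m0 = - 2 * bil G y m0" by (rule Lplus_cv_t[OF that m0])
    then have "even (bil G y v * bil G v m0)" by simp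
    then show ?thesis using m0odd by simp
  qed
  define E where "E = {y. even (bil G y v)}"
  have subE: "zm.subspace E"
    unfolding zm.subspace_def E_def by (auto simp: bil_add1 bil_smult1)
  have H2E: "?H2 \<subseteq> E" using Pt Lminus_cv_D(1) unfolding E_def by fastforce
  have spanE: "zm.span ?H2 \<subseteq> E" by (rule zm.span_minimal[OF H2E subE])
  have m0E: "m0 \<notin> E" unfolding E_def using m0odd bil_sym[OF G, of m0 v] by simp
  have m0n: "m0 \<notin> zm.span ?H2" using spanE m0E by blast
  have H1sub: "?H1 \<subseteq> zm.span (insert m0 ?H2)"
  proof
    fix y assume "y \<in> ?H1"
    then show "y \<in> zm.span (insert m0 ?H2)"
    proof
      assume "y \<in> Lplus c"
      then have "y \<in> ?H2" using Lplus_sub by blast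
      then show ?thesis by (intro zm.span_base) blast
    next
      assume ym: "y \<in> Lminus c"
      define s where "s = bil G y v"
      define r where "r = bil G m0 v"
      have "odd r" unfolding r_def using m0odd bil_sym[OF G, of m0 v] by simp
      then have "even (s * (1 - r))" by simp
      then obtain k where k: "s * (1 - r) = 2 * k" by blast
      define w where "w = y - s *s m0 + k *s v"
      have wm: "w \<in> Lminus c" unfolding w_def using ym m0 v by (intro Lminus_closed) auto
      have "bil G w v = s - s * r - 2 * k"
        unfolding w_def by (simp add: bil_add1 bil_diff1 bil_smult1 vv s_def r_def algebra_simps)
      also have "\<dots> = 0" using k by (simp add: algebra_simps)
      finally have "w \<in> Lminus ?c'" by (rule Lminus_cv_I[OF wm])
      then have "w \<in> zm.span (insert m0 ?H2)" by (intro zm.span_base) blast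
      moreover have "m0 \<in> zm.span (insert m0 ?H2)" by (intro zm.span_base) blast
      moreover have "v \<in> zm.span (insert m0 ?H2)" using v_Lplus_cv by (intro zm.span_base) blast
      ultimately have "w + s *s m0 - k *s v \<in> zm.span (insert m0 ?H2)"
        by (intro zm.span_add zm.span_diff zm.span_scale)
      moreover have "w + s *s m0 - k *s v = y" unfolding w_def by simp
      ultimately show ?thesis by simp
    qed
  qed
  have H2sub: "insert m0 ?H2 \<subseteq> zm.span ?H1"
  proof
    fix y assume "y \<in> insert m0 ?H2"
    then consider "y = m0" | "y \<in> Lplus ?c'" | "y \<in> Lminus ?c'" by blast
    then show "y \<in> zm.span ?H1"
    proof cases
      case 1 then show ?thesis using m0 by (intro zm.span_base) blast
    next
      case 2
      then obtain j where j: "bil G y v = 2 * j" using Pt by blast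
      have cy: "c y = y + bil G y v *s v" using 2 Lplus_cv_iff by blast
      have "c (y + j *s v) = y + j *s v"
        by (simp add: inv_add[OF c] inv_smult[OF c] cy cvv j vec_eq_iff algebra_simps)
      then have "y + j *s v \<in> zm.span ?H1" by (intro zm.span_base) (simp add: Lplus_def)
      moreover have "v \<in> zm.span ?H1" using v by (intro zm.span_base) blast
      ultimately have "(y + j *s v) - j *s v \<in> zm.span ?H1" by (intro zm.span_diff zm.span_scale)
      then show ?thesis by simp
    next
      case 3 then show ?thesis using Lminus_cv_D(2) by (intro zm.span_base) blast
    qed
  qed
  have eq: "zm.span ?H1 = zm.span (insert m0 ?H2)"
    using H1sub H2sub zm.span_eq by blast
  have "gen ?H2 = gen ?H1 + 1"
    by (rule gen_exchange[OF two_in_span[OF c'] m0n eq])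
  then show ?thesis by (simp add: dinv_gen)
qed

lemma mod2_eq_iff: "(a::int) mod 2 = b mod 2 \<longleftrightarrow> (even a \<longleftrightarrow> even b)"
  by presburger

lemma bil_x_cvx: "bil G x ((c \<circ> refl_v G v) x) = bil G x (c x) - bil G x v * bil G x v"
  unfolding cv' by (simp add: bil_diff2 bil_smult2)

lemma wu_iff: "wu_elt G c v \<longleftrightarrow> even_involution G (c \<circ> refl_v G v)"
proof
  assume w: "wu_elt G c v"
  have "even (bil G x ((c \<circ> refl_v G v) x) + bil G x x)" for x
  proof -
    have "(bil G x x + bil G x (c x)) mod 2 = bil G x v mod 2" using w unfolding wu_elt_def by blast
    then show ?thesis unfolding bil_x_cvx mod2_eq_iff
      by (cases "even (bil G x x)"; cases "even (bil G x (c x))"; cases "even (bil G x v)"; simp)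
  qed
  then show "even_involution G (c \<circ> refl_v G v)"
    unfolding even_involution_def using cv_involution[OF G c v vv] by blast
next
  assume e: "even_involution G (c \<circ> refl_v G v)"
  have ev: "even (bil G x (c x) - bil G x v * bil G x v + bil G x x)" for x
    using e bil_x_cvx unfolding even_involution_def by metis
  have cong: "(bil G x x + bil G x (c x)) mod 2 = bil G x v mod 2" for x
    using ev[of x] unfolding mod2_eq_iff
    by (cases "even (bil G x x)"; cases "even (bil G x (c x))"; cases "even (bil G x v)"; simp)
  have "even (bil G v l)" if l: "l \<in> Lminus c" for l
  proof -
    have "bil G l (c l) = - bil G l l" using l by (simp add: Lminus_def bil_neg2)
    then have "even (bil G l v)" using ev[of l] by simp
    then show ?thesis using bil_sym[OF G, of l v] by simp
  qed
  then show "wu_elt G c v" unfolding wu_elt_def even_elt_def using v cong by blast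
qed

lemma refl_refl: "refl_v G v (refl_v G v x) = x"
  unfolding refl_v_def by (simp add: bil_add1 bil_smult1 vv vec_eq_iff algebra_simps)

lemma even_case_from_x:
  assumes x: "x - c x = v"
  shows "dinv (c \<circ> refl_v G v) + 1 = dinv c"
proof -
  let ?c' = "c \<circ> refl_v G v"
  define c2 where "c2 = (\<lambda>y. - ?c' y)"
  have c': "lat_involution G ?c'" by (rule cv_involution[OF G c v vv])
  have n: "c (refl_v G v (- y)) = - c (refl_v G v y)" for y using inv_neg[OF c', of y] by simp
  have c2: "lat_involution G c2"
    using c' n unfolding lat_involution_def c2_def by (auto simp: bil_neg1 bil_neg2)
  have v2: "v \<in> Lminus c2" using v_Lplus_cv unfolding c2_def Lplus_def Lminus_def by simp
  have cx: "c x = x - v" using x by (simp add: algebra_simps)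
  have "bil G (c x) v = - bil G x v" by (rule bil_cx_v[OF c v])
  then have t: "bil G x v = -1" unfolding cx by (simp add: bil_diff1 vv)
  have "?c' x = x" unfolding cv' t cx by simp
  then have xm: "x \<in> Lminus c2" unfolding c2_def Lminus_def by simp
  have "odd (bil G v x)" using t bil_sym[OF G, of v x] by simp
  then have A: "dinv (c2 \<circ> refl_v G v) = dinv c2 + 1"
    using Submission.odd_case[OF G c2 v2 vv xm] by simp
  have "c2 \<circ> refl_v G v = (\<lambda>y. - c y)" unfolding c2_def by (auto simp: refl_refl)
  moreover have "dinv (\<lambda>y. - c y) = dinv c"
  proof -
    have e1: "Lplus (\<lambda>y. - c y) = Lminus c"
      unfolding Lplus_def Lminus_def by (auto, metis minus_minus)
    have e2: "Lminus (\<lambda>y. - c y) = Lplus c"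
      unfolding Lplus_def Lminus_def by auto
    show ?thesis unfolding dinv_gen e1 e2 by (rule arg_cong[where f=gen], rule Un_commute)
  qed
  moreover have "dinv c2 = dinv ?c'"
  proof -
    have e1: "Lplus c2 = Lminus ?c'"
      unfolding Lplus_def Lminus_def c2_def by (auto, metis minus_minus)
    have e2: "Lminus c2 = Lplus ?c'"
      unfolding Lplus_def Lminus_def c2_def by auto
    show ?thesis unfolding dinv_gen e1 e2 by (rule arg_cong[where f=gen], rule Un_commute)
  qed
  ultimately show ?thesis using A by simp
qed

end

theorem proposition3p1:
  fixes G :: "int^'n^'n" and c :: "int^'n \<Rightarrow> int^'n" and v :: "int^'n"
  assumes "unimodular G"
    and "lat_involution G c"
    and "standing_assumption G c"
    and "v \<in> Lminus c"
    and "bil G v v = -2"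
  shows "(odd_elt G c v \<longrightarrow> dinv (c \<circ> refl_v G v) = dinv c + 1)
       \<and> (even_elt G c v \<longrightarrow> dinv (c \<circ> refl_v G v) + 1 = dinv c)
       \<and> (wu_elt G c v \<longleftrightarrow> even_involution G (c \<circ> refl_v G v))
       \<and> (even_involution G (c \<circ> refl_v G v) \<longrightarrow> dinv (c \<circ> refl_v G v) + 1 = dinv c)"
proof -
  have G: "lattice_form G" using assms(1) unfolding unimodular_def by blast
  note c = assms(2) and v = assms(4) and vv = assms(5)
  have P1: "odd_elt G c v \<longrightarrow> dinv (c \<circ> refl_v G v) = dinv c + 1"
  proof
    assume "odd_elt G c v"
    then obtain l where l: "l \<in> Lminus c" "odd (bil G v l)" unfolding odd_elt_def by blast
    show "dinv (c \<circ> refl_v G v) = dinv c + 1" by (rule odd_case[OF G c v vv l])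
  qed
  have P2: "even_elt G c v \<longrightarrow> dinv (c \<circ> refl_v G v) + 1 = dinv c"
  proof
    assume "even_elt G c v"
    then have "\<forall>l\<in>Lminus c. even (bil G v l)" unfolding even_elt_def by blast
    then obtain x where "x - c x = v" using F2_key[OF c assms(1) v] by blast
    then show "dinv (c \<circ> refl_v G v) + 1 = dinv c" by (rule even_case_from_x[OF G c v vv])
  qed
  have P3: "wu_elt G c v \<longleftrightarrow> even_involution G (c \<circ> refl_v G v)" by (rule wu_iff[OF G c v vv])
  have P4: "even_involution G (c \<circ> refl_v G v) \<longrightarrow> dinv (c \<circ> refl_v G v) + 1 = dinv c"
    using P2 P3 unfolding wu_elt_def by blast
  show ?thesis using P1 P2 P3 P4 by blast
qed

end
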